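(* Let $G\subset\mathbb{R}^n$ be a convex body and $u\in\mathbb{S}^{n-1}$. For $t>0$ let $$C_t=\{x\in G: u\cdot x\ge h_G(u)-t\},\qquad S_t=G\cap\{x\in\mathbb{R}^n: u\cdot x=h_G(u)-t\}.$$ Then: (1) $d_{\mathcal H}(C_t,S_t)\ge t$; (2) $d_{\mathcal H}(C_t,S_t)\to 0$ as $t\to 0$; (3) $\mathrm{Vol}(G+C_t)-\mathrm{Vol}(G+S_t)\le 2^n\,\mathrm{Vol}(C_t)$.
   Context: A convex body is a compact convex set with non-empty interior. $h_G(u)=\max\{y\cdot u: y\in G\}$ is the support function. $d_{\mathcal H}$ is the Hausdorff distance, sums are Minkowski sums and $\mathrm{Vol}$ is Lebesgue measure. *)

theory Defs
  imports "HOL-Analysis.Analysis"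
begin

definition support_fun :: "'a::euclidean_space set \<Rightarrow> 'a \<Rightarrow> real" where
  "support_fun G u = (SUP y\<in>G. y \<bullet> u)"

definition hausdorff_dist :: "'a::metric_space set \<Rightarrow> 'a set \<Rightarrow> real" where
  "hausdorff_dist A B = max (SUP x\<in>A. infdist x B) (SUP y\<in>B. infdist y A)"

definition minkowski_sum :: "'a::real_vector set \<Rightarrow> 'a set \<Rightarrow> 'a set" where
  "minkowski_sum A B = {x + y | x y. x \<in> A \<and> y \<in> B}"

definition cap_set :: "'a::euclidean_space set \<Rightarrow> 'a \<Rightarrow> real \<Rightarrow> 'a set" where
  "cap_set G u t = {x \<in> G. u \<bullet> x \<ge> support_fun G u - t}"

definition section_set :: "'a::euclidean_space set \<Rightarrow> 'a \<Rightarrow> real \<Rightarrow> 'a set" where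
  "section_set G u t = G \<inter> {x. u \<bullet> x = support_fun G u - t}"

end

theory Submission
  imports Defs
begin

lemma supp_props:
  fixes G :: "'a::euclidean_space set"
  assumes "compact G" "G \<noteq> {}"
  shows "\<forall>y\<in>G. u \<bullet> y \<le> support_fun G u" and "\<exists>x0\<in>G. u \<bullet> x0 = support_fun G u"
proof -
  obtain x0 where x0: "x0 \<in> G" "\<forall>y\<in>G. y \<bullet> u \<le> x0 \<bullet> u"
    using continuous_attains_sup[OF assms, of "\<lambda>y. y \<bullet> u"] continuous_on_inner[OF continuous_on_id continuous_on_const] by auto
  have "support_fun G u = x0 \<bullet> u" unfolding support_fun_def
    by (rule antisym, rule cSUP_least, use x0 in auto) (rule cSUP_upper, use x0 in \<open>auto intro!: bdd_aboveI2\<close>)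
  then show "\<forall>y\<in>G. u \<bullet> y \<le> support_fun G u" and "\<exists>x0\<in>G. u \<bullet> x0 = support_fun G u"
    using x0 by (auto simp: inner_commute)
qed

lemma part1:
  fixes G :: "'a::euclidean_space set"
  assumes "compact G" "norm u = 1" "t > 0" "section_set G u t \<noteq> {}"
  shows "hausdorff_dist (cap_set G u t) (section_set G u t) \<ge> t"
proof -
  define h where "h = support_fun G u"
  define C where "C = cap_set G u t"
  define S where "S = section_set G u t"
  have Gne: "G \<noteq> {}" using assms(4) unfolding section_set_def by auto
  note sp = supp_props[OF assms(1) Gne, of u, folded h_def]
  obtain x0 where x0: "x0 \<in> G" "u \<bullet> x0 = h" using sp by auto
  have x0C: "x0 \<in> C" using x0 assms(3) by (auto simp: C_def cap_set_def h_def)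
  obtain s0 where s0: "s0 \<in> S" using assms(4) S_def by auto
  obtain R where R: "\<forall>x\<in>G. norm x \<le> R" using compact_imp_bounded[OF assms(1)] bounded_iff by auto
  have SG: "S \<subseteq> G" "C \<subseteq> G" by (auto simp: S_def C_def section_set_def cap_set_def)
  have bdd: "bdd_above ((\<lambda>x. infdist x S) ` C)"
  proof (rule bdd_aboveI2)
    fix x assume "x \<in> C"
    have "infdist x S \<le> dist x s0" by (rule infdist_le[OF s0])
    also have "\<dots> \<le> norm x + norm s0" by (simp add: dist_norm norm_triangle_ineq4)
    also have "\<dots> \<le> R + R" using R SG \<open>x \<in> C\<close> s0 by (intro add_mono) auto
    finally show "infdist x S \<le> R + R" .
  qed
  have "t \<le> infdist x0 S"
    unfolding infdist_notempty[OF assms(4)[folded S_def]]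
  proof (rule cINF_greatest)
    show "S \<noteq> {}" using s0 by auto
    fix s assume "s \<in> S"
    then have "u \<bullet> s = h - t" by (auto simp: S_def section_set_def h_def)
    then have "t = u \<bullet> (x0 - s)" using x0 by (simp add: inner_diff_right)
    also have "\<dots> \<le> norm u * norm (x0 - s)" by (rule norm_cauchy_schwarz)
    finally show "t \<le> dist x0 s" using assms(2) by (simp add: dist_norm)
  qed
  also have "\<dots> \<le> (SUP x\<in>C. infdist x S)" by (rule cSUP_upper[OF x0C bdd])
  also have "\<dots> \<le> hausdorff_dist C S" unfolding hausdorff_dist_def by simp
  finally show ?thesis by (simp add: C_def S_def)
qed

lemma part2:
  fixes G :: "'a::euclidean_space set"
  assumes "compact G" "convex G" "interior G \<noteq> {}" "norm u = 1"
  shows "((\<lambda>t. hausdorff_dist (cap_set G u t) (section_set G u t)) \<longlongrightarrow> 0) (at_right 0)"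
proof -
  define h where "h = support_fun G u"
  obtain z where zi: "z \<in> interior G" using assms(3) by auto
  then obtain e where e: "e > 0" "ball z e \<subseteq> G" using mem_interior by blast
  have zG: "z \<in> G" using zi interior_subset by auto
  have Gne: "G \<noteq> {}" using zG by auto
  note sp = supp_props[OF assms(1) Gne, of u, folded h_def]
  obtain x0 where x0: "x0 \<in> G" "u \<bullet> x0 = h" using sp by auto
  have uu: "u \<bullet> u = 1" using assms(4) by (simp add: power2_norm_eq_inner[symmetric])
  have "z + (e/2) *\<^sub>R u \<in> ball z e" using e assms(4) by (simp add: dist_norm)
  then have "z + (e/2) *\<^sub>R u \<in> G" using e by auto
  then have "u \<bullet> (z + (e/2) *\<^sub>R u) \<le> h" using sp by auto
  then have "u \<bullet> z + e/2 \<le> h" using uu by (simp add: inner_add_right)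
  define \<delta> where "\<delta> = h - u \<bullet> z"
  have dpos: "\<delta> > 0" using e \<open>u \<bullet> z + e/2 \<le> h\<close> by (simp add: \<delta>_def)
  obtain R where R: "\<forall>x\<in>G. norm x \<le> R" using compact_imp_bounded[OF assms(1)] bounded_iff by auto
  have R0: "R \<ge> 0" using R zG norm_ge_zero order_trans by blast
  define K where "K = 4 * R / \<delta>"
  have K0: "K \<ge> 0" using R0 dpos by (simp add: K_def)
  have key: "0 \<le> hausdorff_dist (cap_set G u t) (section_set G u t)
          \<and> hausdorff_dist (cap_set G u t) (section_set G u t) \<le> K * t"
    if t: "0 < t" "t < \<delta>/2" for t
  proof -
    define C where "C = cap_set G u t"
    define S where "S = section_set G u t"
    have near: "\<exists>p\<in>S. dist y p \<le> K * t" if yC: "y \<in> C" for y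
    proof -
      have yG: "y \<in> G" and yu: "u \<bullet> y \<ge> h - t" using yC by (auto simp: C_def cap_set_def h_def)
      have yh: "u \<bullet> y \<le> h" using sp yG by auto
      define a where "a = u \<bullet> y - (h - t)"
      define b where "b = u \<bullet> y - u \<bullet> z"
      have a0: "0 \<le> a" "a \<le> t" using yu yh by (auto simp: a_def)
      have b0: "b \<ge> \<delta>/2" using yu t by (simp add: b_def \<delta>_def)
      have bpos: "b > 0" using b0 dpos by linarith
      define l where "l = a / b"
      have l0: "0 \<le> l" using a0 bpos by (simp add: l_def)
      have l1: "l \<le> t / (\<delta>/2)" unfolding l_def
        using a0 b0 dpos t by (intro frac_le) auto
      have "l \<le> 1" using a0 b0 t bpos by (simp add: l_def divide_le_eq_1)
      define p where "p = (1 - l) *\<^sub>R y + l *\<^sub>R z"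
      have pG: "p \<in> G" unfolding p_def
        using convexD[OF assms(2) yG zG, of "1 - l" l] l0 \<open>l \<le> 1\<close> by auto
      have "u \<bullet> p = u \<bullet> y - l * b"
        by (simp add: p_def inner_add_right b_def algebra_simps)
      also have "l * b = a" using bpos by (simp add: l_def)
      finally have "u \<bullet> p = h - t" by (simp add: a_def)
      then have pS: "p \<in> S" using pG by (simp add: S_def section_set_def h_def)
      have "y - p = l *\<^sub>R (y - z)" by (simp add: p_def algebra_simps)
      then have "dist y p = l * norm (y - z)" using l0 by (simp add: dist_norm)
      also have "\<dots> \<le> (t / (\<delta>/2)) * (R + R)"
      proof (rule mult_mono)
        show "norm (y - z) \<le> R + R"
          using R yG zG norm_triangle_ineq4[of y z] by (smt (verit))
      qed (use l1 t dpos R0 in auto)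
      also have "\<dots> = K * t" by (simp add: K_def field_simps)
      finally show ?thesis using pS by blast
    qed
    have x0C: "x0 \<in> C" using x0 t by (auto simp: C_def cap_set_def h_def)
    have Sne: "S \<noteq> {}" using near[OF x0C] by auto
    have SC: "S \<subseteq> C" by (auto simp: S_def C_def section_set_def cap_set_def)
    have s2: "(SUP y\<in>S. infdist y C) = 0"
    proof -
      have "(SUP y\<in>S. infdist y C) = (SUP y\<in>S. (0::real))"
        using SC by (intro SUP_cong) auto
      then show ?thesis using Sne by simp
    qed
    have s1: "(SUP x\<in>C. infdist x S) \<le> K * t"
    proof (rule cSUP_least)
      show "C \<noteq> {}" using x0C by auto
      fix x assume "x \<in> C"
      then obtain p where "p \<in> S" "dist x p \<le> K * t" using near by blast
      then show "infdist x S \<le> K * t" using infdist_le2 by blast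
    qed
    have "hausdorff_dist C S = max (SUP x\<in>C. infdist x S) 0"
      unfolding hausdorff_dist_def s2 ..
    then show ?thesis using s1 K0 t by (simp add: C_def S_def)
  qed
  have ev: "eventually (\<lambda>t. 0 \<le> hausdorff_dist (cap_set G u t) (section_set G u t)
          \<and> hausdorff_dist (cap_set G u t) (section_set G u t) \<le> K * t) (at_right 0)"
    unfolding eventually_at_right_field using dpos key by (intro exI[of _ "\<delta>/2"]) auto
  have lim: "((\<lambda>t. K * t) \<longlongrightarrow> 0) (at_right (0::real))"
    using tendsto_mult[OF tendsto_const[of K] tendsto_ident_at[of "0::real" "{0<..}"]] by simp
  show ?thesis
    by (rule tendsto_sandwich[OF _ _ tendsto_const lim]) (use ev in \<open>auto elim: eventually_mono\<close>)
qed


lemma part3: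
  fixes G :: "'a::euclidean_space set"
  assumes "compact G" "convex G" "t > 0"
  shows "measure lebesgue (minkowski_sum G (cap_set G u t))
                 - measure lebesgue (minkowski_sum G (section_set G u t))
               \<le> 2 ^ DIM('a) * measure lebesgue (cap_set G u t)"
proof -
  define h where "h = support_fun G u"
  define C where "C = cap_set G u t"
  define S where "S = section_set G u t"
  have Ceq: "C = G \<inter> {x. inner u x \<ge> h - t}" by (auto simp: C_def cap_set_def h_def)
  have Seq: "S = G \<inter> {x. inner u x = h - t}" by (auto simp: S_def section_set_def h_def)
  have cC: "compact C" unfolding Ceq using assms(1) closed_halfspace_ge by (rule compact_Int_closed)
  have cS: "compact S" unfolding Seq using assms(1) closed_hyperplane by (rule compact_Int_closed)
  have convC: "convex C" unfolding Ceq using assms(2) convex_halfspace_ge by (rule convex_Int)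
  have cM: "compact (minkowski_sum A B)" if "compact A" "compact B" for A B :: "'a set"
    unfolding minkowski_sum_def using compact_sums[OF that] .
  have incl: "minkowski_sum G C \<subseteq> minkowski_sum G S \<union> minkowski_sum C C"
  proof
    fix w assume "w \<in> minkowski_sum G C"
    then obtain x y where w: "w = x + y" "x \<in> G" "y \<in> C" by (auto simp: minkowski_sum_def)
    show "w \<in> minkowski_sum G S \<union> minkowski_sum C C"
    proof (cases "u \<bullet> x \<ge> h - t")
      case True
      then have "x \<in> C" using w by (simp add: Ceq)
      then show ?thesis using w by (auto simp: minkowski_sum_def)
    next
      case False
      have yG: "y \<in> G" and yu: "u \<bullet> y \<ge> h - t" using w by (auto simp: Ceq)
      define l where "l = (h - t - u \<bullet> x) / (u \<bullet> y - u \<bullet> x)"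
      have dpos: "u \<bullet> y - u \<bullet> x > 0" using False yu by linarith
      have l0: "0 \<le> l" "l \<le> 1" using False yu dpos by (auto simp: l_def divide_le_eq_1)
      define p where "p = (1 - l) *\<^sub>R x + l *\<^sub>R y"
      define g where "g = l *\<^sub>R x + (1 - l) *\<^sub>R y"
      have pG: "p \<in> G" unfolding p_def using convexD[OF assms(2) w(2) yG, of "1 - l" l] l0 by auto
      have gG: "g \<in> G" unfolding g_def using convexD[OF assms(2) w(2) yG, of l "1 - l"] l0 by auto
      have "u \<bullet> p = u \<bullet> x + l * (u \<bullet> y - u \<bullet> x)"
        by (simp add: p_def inner_add_right algebra_simps)
      also have "l * (u \<bullet> y - u \<bullet> x) = h - t - u \<bullet> x" using dpos by (simp add: l_def)
      finally have "p \<in> S" using pG by (simp add: Seq)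
      moreover have "w = g + p" using w by (simp add: g_def p_def algebra_simps)
      ultimately show ?thesis using gG by (auto simp: minkowski_sum_def)
    qed
  qed
  have CC: "minkowski_sum C C = (\<lambda>x. 2 *\<^sub>R x + 0) ` C"
  proof
    show "minkowski_sum C C \<subseteq> (\<lambda>x. 2 *\<^sub>R x + 0) ` C"
    proof
      fix w assume "w \<in> minkowski_sum C C"
      then obtain x y where w: "w = x + y" "x \<in> C" "y \<in> C" by (auto simp: minkowski_sum_def)
      have "(1/2) *\<^sub>R x + (1/2) *\<^sub>R y \<in> C" using convexD[OF convC w(2,3), of "1/2" "1/2"] by auto
      moreover have "w = 2 *\<^sub>R ((1/2) *\<^sub>R x + (1/2) *\<^sub>R y) + 0" using w by (simp add: algebra_simps)
      ultimately show "w \<in> (\<lambda>x. 2 *\<^sub>R x + 0) ` C" by blast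
    qed
  next
    show "(\<lambda>x. 2 *\<^sub>R x + 0) ` C \<subseteq> minkowski_sum C C"
    proof
      fix w assume "w \<in> (\<lambda>x. 2 *\<^sub>R x + 0) ` C"
      then obtain x where "x \<in> C" "w = x + x" by (auto simp: scaleR_2)
      then show "w \<in> minkowski_sum C C" by (auto simp: minkowski_sum_def)
    qed
  qed
  have m1: "minkowski_sum G S \<in> lmeasurable" by (intro lmeasurable_compact cM assms(1) cS)
  have m2: "minkowski_sum C C \<in> lmeasurable" by (intro lmeasurable_compact cM cC)
  have m3: "minkowski_sum G C \<in> lmeasurable" by (intro lmeasurable_compact cM assms(1) cC)
  have "measure lebesgue (minkowski_sum G C) \<le> measure lebesgue (minkowski_sum G S \<union> minkowski_sum C C)"
    using m1 m2 m3 incl by (intro measure_mono_fmeasurable) auto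
  also have "\<dots> \<le> measure lebesgue (minkowski_sum G S) + measure lebesgue (minkowski_sum C C)"
    using m1 m2 by (intro measure_Un_le) auto
  also have "measure lebesgue (minkowski_sum C C) = 2 ^ DIM('a) * measure lebesgue C"
    unfolding CC using measure_lebesgue_affine[of 2 0 C] by simp
  finally show ?thesis by (simp add: C_def S_def)
qed

theorem lemma4p2:
  fixes G :: "'a::euclidean_space set" and u :: 'a
  assumes "compact G" and "convex G" and "interior G \<noteq> {}"
    and "norm u = 1"
  shows "(\<forall>t>0. section_set G u t \<noteq> {} \<longrightarrow>
            hausdorff_dist (cap_set G u t) (section_set G u t) \<ge> t)
       \<and> ((\<lambda>t. hausdorff_dist (cap_set G u t) (section_set G u t)) \<longlongrightarrow> 0) (at_right 0)
       \<and> (\<forall>t>0. measure lebesgue (minkowski_sum G (cap_set G u t))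
                 - measure lebesgue (minkowski_sum G (section_set G u t))
               \<le> 2 ^ DIM('a) * measure lebesgue (cap_set G u t))"
  using part1[OF assms(1,4)] part2[OF assms] part3[OF assms(1,2)] by blast

end
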